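(* Let $q=(V_q,E_q,L_q)$ and $H=(V_H,E_H,L_H)$ be hypergraphs, let $E'\subseteq E_q$ be non-empty with partial query $q'=(\bigcup_{e\in E'}e,E',L_q)$, and let $M:E'\to E_H$ be any map. Then $M$ is a partial embedding of $q'$ in $H$ if and only if for every non-empty subset $S\subseteq E'$ we have $Sig(\mathrm{Cell}_q(S))=Sig(\mathrm{Cell}_H^M(S))$.
   Context: A (vertex-labeled) hypergraph is a triple $H=(V,E,L)$ where $V$ is a finite set, $E$ is a set of non-empty subsets of $V$ (hyperedges, no repeated hyperedges) with $\bigcup_{e\in E}e=V$, and $L:V\to\Sigma$ assigns each vertex a label. For $S\subseteq V$, $Sig(S)$ is the multiset of labels $\{L(v)\mid v\in S\}$. For $E'\subseteq E_q$, the partial query is $q'=(\bigcup_{e\in E'}e,E',L_q)$; a map $M:E'\to E_H$ is a partial embedding if there exists an injective label-preserving $\phi:\bigcup_{e\in E'}e\to V_H$ with $\{\phi(u):u\in e\}=M(e)$ for all $e\in E'$. Cells: for non-empty $S\subseteq E'$, $\mathrm{Cell}_q(S)=\{u\in\bigcup_{e\in E'}e : \{e\in E': u\in e\}=S\}$ (vertices lying in all hyperedges of $S$ and in no hyperedge of $E'\setminus S$), and $\mathrm{Cell}^M_H(S)=\{v\in\bigcup_{e\in E'}M(e) : \{e\in E': v\in M(e)\}=S\}$ (the corresponding cell of the image hyperedges $M(S)$). *)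

theory Defs
  imports Main "HOL-Library.Multiset"
begin

definition hypergraph :: "'v set \<Rightarrow> 'v set set \<Rightarrow> ('v \<Rightarrow> 'l) \<Rightarrow> bool" where
  "hypergraph V E L \<longleftrightarrow> finite V \<and> (\<forall>e\<in>E. e \<noteq> {} \<and> e \<subseteq> V) \<and> \<Union>E = V"

definition Sig :: "('v \<Rightarrow> 'l) \<Rightarrow> 'v set \<Rightarrow> 'l multiset" where
  "Sig L S = image_mset L (mset_set S)"

text \<open>M : E' \<rightarrow> E_H is a partial embedding of q' = (\<Union>E', E', L_q) in H.\<close>
definition partial_embedding ::
  "'a set set \<Rightarrow> ('a \<Rightarrow> 'l) \<Rightarrow> 'b set set \<Rightarrow> ('b \<Rightarrow> 'l) \<Rightarrow> ('a set \<Rightarrow> 'b set) \<Rightarrow> bool" where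
  "partial_embedding E' Lq EH LH M \<longleftrightarrow>
     (\<forall>e\<in>E'. M e \<in> EH) \<and>
     (\<exists>\<phi>. inj_on \<phi> (\<Union>E') \<and> (\<forall>u\<in>\<Union>E'. LH (\<phi> u) = Lq u) \<and> (\<forall>e\<in>E'. \<phi> ` e = M e))"

definition cell_q :: "'a set set \<Rightarrow> 'a set set \<Rightarrow> 'a set" where
  "cell_q E' S = {u \<in> \<Union>E'. {e \<in> E'. u \<in> e} = S}"

definition cell_H :: "'a set set \<Rightarrow> ('a set \<Rightarrow> 'b set) \<Rightarrow> 'a set set \<Rightarrow> 'b set" where
  "cell_H E' M S = {v \<in> \<Union>(M ` E'). {e \<in> E'. v \<in> M e} = S}"

end

theory Submission
  imports Defs
begin

lemma cnt: "finite A \<Longrightarrow> count (image_mset L (mset_set A)) l = card {a\<in>A. L a = l}"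
  by (smt (verit, del_insts) Collect_cong count_conv_size_mset
    filter_mset_image_mset filter_mset_mset_set size_image_mset
    size_mset_set)

lemma mem_mset_setD: "x \<in># mset_set A \<Longrightarrow> x \<in> A"
  by (cases "finite A") auto

lemma sig_bij:
  assumes A: "finite A" and B: "finite B"
    and eq: "image_mset L (mset_set A) = image_mset L' (mset_set B)"
  shows "\<exists>f. bij_betw f A B \<and> (\<forall>a\<in>A. L' (f a) = L a)"
proof -
  have c: "card {a\<in>A. L a = l} = card {b\<in>B. L' b = l}" for l
    using cnt[OF A, of L l] cnt[OF B, of L' l] eq by simp
  have "\<exists>g. bij_betw g {a\<in>A. L a = l} {b\<in>B. L' b = l}" for l
    using c[of l] A B by (simp add: bij_betw_iff_card)
  then obtain g where g: "\<And>l. bij_betw (g l) {a\<in>A. L a = l} {b\<in>B. L' b = l}"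
    by metis
  define f where "f a = g (L a) a" for a
  have lab: "\<forall>a\<in>A. L' (f a) = L a"
  proof
    fix a assume "a \<in> A"
    then have "a \<in> {x\<in>A. L x = L a}" by simp
    then have "f a \<in> {b\<in>B. L' b = L a}" unfolding f_def using g[of "L a"]
      by (meson bij_betwE)
    then show "L' (f a) = L a" by simp
  qed
  have "bij_betw f A B"
    unfolding bij_betw_def
  proof (intro conjI)
    show "inj_on f A"
    proof (rule inj_onI)
      fix a b assume ab: "a \<in> A" "b \<in> A" "f a = f b"
      then have "L a = L b" using lab by metis
      then have "g (L a) a = g (L a) b" using ab(3) by (simp add: f_def)
      moreover have "inj_on (g (L a)) {x\<in>A. L x = L a}" using g[of "L a"] unfolding bij_betw_def by (elim conjE)
      moreover have "a \<in> {x\<in>A. L x = L a}" "b \<in> {x\<in>A. L x = L a}" using ab `L a = L b` by simp_all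
      ultimately show "a = b" by (metis inj_onD)
    qed
    show "f ` A = B"
    proof
      show "f ` A \<subseteq> B"
      proof
        fix y assume "y \<in> f ` A"
        then obtain a where a: "a \<in> A" "y = f a" by auto
        then have "a \<in> {x\<in>A. L x = L a}" by simp
        then have "f a \<in> {b\<in>B. L' b = L a}" unfolding f_def using g[of "L a"]
          by (meson bij_betwE)
        then show "y \<in> B" using a by simp
      qed
      show "B \<subseteq> f ` A"
      proof
        fix b assume b: "b \<in> B"
        then have "b \<in> {y\<in>B. L' y = L' b}" by simp
        moreover have "g (L' b) ` {x\<in>A. L x = L' b} = {y\<in>B. L' y = L' b}"
          using g[of "L' b"] unfolding bij_betw_def by (elim conjE)
        ultimately have "b \<in> g (L' b) ` {x\<in>A. L x = L' b}" by (simp only:)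
        then obtain a where a: "a \<in> {x\<in>A. L x = L' b}" "g (L' b) a = b" by (rule imageE) simp
        then have "f a = b" unfolding f_def by simp
        moreover have "a \<in> A" using a by simp
        ultimately show "b \<in> f ` A" by (metis imageI)
      qed
    qed
  qed
  then show ?thesis using lab by (intro exI[of _ f]) simp
qed

theorem theorem3:
  fixes Vq :: "'a set" and Eq :: "'a set set" and Lq :: "'a \<Rightarrow> 'l"
    and VH :: "'b set" and EH :: "'b set set" and LH :: "'b \<Rightarrow> 'l"
    and E' :: "'a set set" and M :: "'a set \<Rightarrow> 'b set"
  assumes "hypergraph Vq Eq Lq" and "hypergraph VH EH LH"
    and "E' \<subseteq> Eq" and "E' \<noteq> {}"
    and "\<forall>e\<in>E'. M e \<in> EH"
  shows "partial_embedding E' Lq EH LH M \<longleftrightarrow>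
         (\<forall>S. S \<subseteq> E' \<and> S \<noteq> {} \<longrightarrow> Sig Lq (cell_q E' S) = Sig LH (cell_H E' M S))"
proof
  assume "partial_embedding E' Lq EH LH M"
  then obtain \<phi> where inj: "inj_on \<phi> (\<Union>E')" and lab: "\<forall>u\<in>\<Union>E'. LH (\<phi> u) = Lq u"
    and im: "\<forall>e\<in>E'. \<phi> ` e = M e"
    unfolding partial_embedding_def by blast
  show "\<forall>S. S \<subseteq> E' \<and> S \<noteq> {} \<longrightarrow> Sig Lq (cell_q E' S) = Sig LH (cell_H E' M S)"
  proof (intro allI impI)
    fix S assume "S \<subseteq> E' \<and> S \<noteq> {}"
    have mem: "\<phi> u \<in> M e \<longleftrightarrow> u \<in> e" if "u \<in> \<Union>E'" "e \<in> E'" for u e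
    proof -
      have "e \<subseteq> \<Union>E'" using that by blast
      then show ?thesis using im that inj by (metis inj_on_image_mem_iff)
    qed
    have un0: "\<Union>(M ` E') = \<Union>((`) \<phi> ` E')" using im by auto
    have un: "\<Union>(M ` E') = \<phi> ` (\<Union>E')" unfolding un0 by (simp add: image_Union)
    have ch: "cell_H E' M S = \<phi> ` cell_q E' S"
    proof
      show "cell_H E' M S \<subseteq> \<phi> ` cell_q E' S"
      proof
        fix v assume v: "v \<in> cell_H E' M S"
        then have "v \<in> \<phi> ` (\<Union>E')" using un unfolding cell_H_def by blast
        then obtain u where u: "u \<in> \<Union>E'" "v = \<phi> u" by blast
        have "{e \<in> E'. u \<in> e} = {e \<in> E'. v \<in> M e}" using mem u by auto
        then have "u \<in> cell_q E' S" using v u unfolding cell_H_def cell_q_def by auto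
        then show "v \<in> \<phi> ` cell_q E' S" using u by blast
      qed
      show "\<phi> ` cell_q E' S \<subseteq> cell_H E' M S"
      proof
        fix v assume "v \<in> \<phi> ` cell_q E' S"
        then obtain u where u: "u \<in> cell_q E' S" "v = \<phi> u" by blast
        then have u1: "u \<in> \<Union>E'" unfolding cell_q_def by blast
        have "{e \<in> E'. u \<in> e} = {e \<in> E'. v \<in> M e}" using mem u u1 by auto
        then show "v \<in> cell_H E' M S" using u u1 un unfolding cell_H_def cell_q_def by auto
      qed
    qed
    have sub: "cell_q E' S \<subseteq> \<Union>E'" unfolding cell_q_def by blast
    have "Sig LH (cell_H E' M S) = image_mset LH (image_mset \<phi> (mset_set (cell_q E' S)))"
      unfolding Sig_def ch using image_mset_mset_set[OF inj_on_subset[OF inj sub]] by simp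
    also have "\<dots> = image_mset Lq (mset_set (cell_q E' S))"
      unfolding multiset.map_comp
      by (rule image_mset_cong) (use lab sub in \<open>auto dest: mem_mset_setD\<close>)
    finally show "Sig Lq (cell_q E' S) = Sig LH (cell_H E' M S)" unfolding Sig_def by simp
  qed
next
  assume H: "\<forall>S. S \<subseteq> E' \<and> S \<noteq> {} \<longrightarrow> Sig Lq (cell_q E' S) = Sig LH (cell_H E' M S)"
  have finq: "finite (\<Union>E')" using assms(1,3) unfolding hypergraph_def
    by (meson Union_mono finite_subset)
  have finH: "finite (\<Union>(M ` E'))" using assms(2,5) unfolding hypergraph_def
    by (metis (no_types, lifting) UN_subset_iff finite_subset)
  have "\<exists>f. S \<subseteq> E' \<and> S \<noteq> {} \<longrightarrow> bij_betw f (cell_q E' S) (cell_H E' M S) \<and> (\<forall>a\<in>cell_q E' S. LH (f a) = Lq a)" for S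
  proof (cases "S \<subseteq> E' \<and> S \<noteq> {}")
    case True
    have "finite (cell_q E' S)" using finq unfolding cell_q_def by (rule rev_finite_subset) blast
    moreover have "finite (cell_H E' M S)" using finH unfolding cell_H_def by (rule rev_finite_subset) blast
    ultimately show ?thesis using sig_bij[of "cell_q E' S" "cell_H E' M S" Lq LH] H True
      unfolding Sig_def by blast
  qed blast
  then obtain F where F: "\<And>S. S \<subseteq> E' \<Longrightarrow> S \<noteq> {} \<Longrightarrow> bij_betw (F S) (cell_q E' S) (cell_H E' M S) \<and> (\<forall>a\<in>cell_q E' S. LH (F S a) = Lq a)"
    by metis
  define C where "C u = {e \<in> E'. u \<in> e}" for u
  define \<phi> where "\<phi> u = F (C u) u" for u
  have Cok: "C u \<subseteq> E'" "C u \<noteq> {}" "u \<in> cell_q E' (C u)" if "u \<in> \<Union>E'" for u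
    using that unfolding C_def cell_q_def by auto
  have phiC: "\<phi> u \<in> cell_H E' M (C u)" "LH (\<phi> u) = Lq u" if "u \<in> \<Union>E'" for u
    using F[OF Cok(1,2)[OF that]] Cok(3)[OF that] unfolding \<phi>_def bij_betw_def by auto
  have inj: "inj_on \<phi> (\<Union>E')"
  proof (rule inj_onI)
    fix u v assume uv: "u \<in> \<Union>E'" "v \<in> \<Union>E'" "\<phi> u = \<phi> v"
    have "C u = C v" using phiC(1)[OF uv(1)] phiC(1)[OF uv(2)] uv(3) unfolding cell_H_def by auto
    then have "F (C u) u = F (C u) v" using uv(3) by (simp add: \<phi>_def)
    moreover have "inj_on (F (C u)) (cell_q E' (C u))" using F[OF Cok(1,2)[OF uv(1)]] bij_betw_def by blast
    ultimately show "u = v" using Cok(3)[OF uv(1)] Cok(3)[OF uv(2)] `C u = C v` by (auto dest: inj_onD)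
  qed
  have im: "\<phi> ` e = M e" if e: "e \<in> E'" for e
  proof
    show "\<phi> ` e \<subseteq> M e"
    proof
      fix y assume "y \<in> \<phi> ` e"
      then obtain u where u: "u \<in> e" "y = \<phi> u" by blast
      then have u1: "u \<in> \<Union>E'" using e by blast
      have "e \<in> C u" using u e unfolding C_def by simp
      then show "y \<in> M e" using phiC(1)[OF u1] u unfolding cell_H_def by auto
    qed
    show "M e \<subseteq> \<phi> ` e"
    proof
      fix v assume v: "v \<in> M e"
      define S where "S = {e' \<in> E'. v \<in> M e'}"
      have S: "S \<subseteq> E'" "S \<noteq> {}" "e \<in> S" using v e unfolding S_def by auto
      have vU: "v \<in> \<Union>(M ` E')" using v e by blast
      have vc: "v \<in> cell_H E' M S" unfolding cell_H_def S_def using vU by (simp only: mem_Collect_eq simp_thms)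
      have bj: "F S ` cell_q E' S = cell_H E' M S" using F[OF S(1,2)] unfolding bij_betw_def by (elim conjE)
      have "v \<in> F S ` cell_q E' S" using vc bj by (simp only:)
      then obtain u where u: "u \<in> cell_q E' S" "F S u = v" by blast
      have uq: "u \<in> \<Union>E' \<and> {e \<in> E'. u \<in> e} = S" using u(1) unfolding cell_q_def by (simp only: mem_Collect_eq)
      have CS: "C u = S" using uq unfolding C_def by (rule conjunct2)
      have "e \<in> C u" using CS S(3) by (simp only:)
      then have "u \<in> e" unfolding C_def by (simp only: mem_Collect_eq)
      moreover have "\<phi> u = v" using u(2) CS unfolding \<phi>_def by (simp only:)
      ultimately show "v \<in> \<phi> ` e" by blast
    qed
  qed
  show "partial_embedding E' Lq EH LH M"
    unfolding partial_embedding_def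
  proof (intro conjI exI[of _ \<phi>])
    show "\<forall>u\<in>\<Union>E'. LH (\<phi> u) = Lq u" using phiC(2) by blast
    show "inj_on \<phi> (\<Union>E')" by (rule inj)
    show "\<forall>e\<in>E'. \<phi> ` e = M e" using im by blast
    show "\<forall>e\<in>E'. M e \<in> EH" using assms(5) by blast
  qed
qed

end
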